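(* Let $\mathbb{T}$ be a bounded time scale, $\alpha=\inf\mathbb{T}$, $\beta=\rho(\sup\mathbb{T})$ with $\alpha\neq\beta$, let $a\in\mathbb{T}^{\kappa}$, and let $q$ be a real-valued continuous function. Consider the boundary value problem consisting of $$-y^{\Delta\Delta}(t)+q(t)\,y(a)=\lambda\, y^{\sigma}(t),\qquad t\in\mathbb{T}^{\kappa^{2}},$$ together with the boundary conditions $U(y)=0$, $V(y)=0$, where $$U(y)=a_{11}y(\alpha)+a_{12}y^{\Delta}(\alpha)+a_{21}y(\beta)+a_{22}y^{\Delta}(\beta),\qquad V(y)=b_{11}y(\alpha)+b_{12}y^{\Delta}(\alpha)+b_{21}y(\beta)+b_{22}y^{\Delta}(\beta),$$ with real coefficients $a_{ij},b_{ij}$ ($i,j=1,2$). Let $S(t,\lambda)$, $C(t,\lambda)$ be the solutions of the equation with $S(a,\lambda)=0$, $S^{\Delta}(a,\lambda)=1$, $C(a,\lambda)=1$, $C^{\Delta}(a,\lambda)=0$, and define $$\Delta(\lambda)=\det\begin{pmatrix}U(C) & V(C)\\ U(S) & V(S)\end{pmatrix}=U(C(\cdot,\lambda))V(S(\cdot,\lambda))-V(C(\cdot,\lambda))U(S(\cdot,\lambda)).$$ Then the zeros of $\Delta(\lambda)$ coincide with the eigenvalues of this boundary value problem (i.e. with the values $\lambda\in\mathbb{C}$ for which the problem has a nontrivial solution).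
   Context: For a time scale $\mathbb{T}$, $\sigma$ and $\rho$ are the forward and backward jump operators, $y^{\sigma}=y\circ\sigma$, $y^{\Delta}$ and $y^{\Delta\Delta}$ are the first and second delta derivatives, $\mathbb{T}^{\kappa}=\mathbb{T}\setminus(\rho(\sup\mathbb{T}),\sup\mathbb{T}]$, $\mathbb{T}^{\kappa^2}=(\mathbb{T}^{\kappa})^{\kappa}$. $\lambda\in\mathbb{C}$ is the spectral parameter. *)

theory Defs
  imports "HOL-Analysis.Analysis"
begin

definition time_scale :: "real set \<Rightarrow> bool" where
  "time_scale T \<longleftrightarrow> T \<noteq> {} \<and> closed T"

text \<open>Forward jump: sigma t = inf of points of T to the right of t (inf of the empty set = sup T,
  i.e. sigma of the maximum is the maximum itself).\<close>
definition sigma :: "real set \<Rightarrow> real \<Rightarrow> real" where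
  "sigma T t = (if \<exists>s\<in>T. s > t then Inf {s\<in>T. s > t} else t)"

text \<open>Backward jump: rho t = sup of points of T to the left of t (sup of the empty set = inf T).\<close>
definition rho :: "real set \<Rightarrow> real \<Rightarrow> real" where
  "rho T t = (if \<exists>s\<in>T. s < t then Sup {s\<in>T. s < t} else t)"

definition Tkappa :: "real set \<Rightarrow> real set" where
  "Tkappa T = T - {rho T (Sup T)<..Sup T}"

definition has_delta_derivative ::
  "real set \<Rightarrow> (real \<Rightarrow> complex) \<Rightarrow> complex \<Rightarrow> real \<Rightarrow> bool" where
  "has_delta_derivative T f D t \<longleftrightarrow> t \<in> Tkappa T \<and>
     (\<forall>\<epsilon>>0. \<exists>\<delta>>0. \<forall>s\<in>T. \<bar>s - t\<bar> < \<delta> \<longrightarrow>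
        cmod (f (sigma T t) - f s - D * complex_of_real (sigma T t - s)) \<le> \<epsilon> * \<bar>sigma T t - s\<bar>)"

definition delta_deriv :: "real set \<Rightarrow> (real \<Rightarrow> complex) \<Rightarrow> real \<Rightarrow> complex" where
  "delta_deriv T f t = (THE D. has_delta_derivative T f D t)"

definition is_solution ::
  "real set \<Rightarrow> (real \<Rightarrow> real) \<Rightarrow> real \<Rightarrow> complex \<Rightarrow> (real \<Rightarrow> complex) \<Rightarrow> bool" where
  "is_solution T q a lam y \<longleftrightarrow>
     (\<forall>t\<in>Tkappa T. \<exists>D. has_delta_derivative T y D t) \<and>
     (\<forall>t\<in>Tkappa (Tkappa T). \<exists>D. has_delta_derivative (Tkappa T) (delta_deriv T y) D t) \<and>
     (\<forall>t\<in>Tkappa (Tkappa T).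
        - delta_deriv (Tkappa T) (delta_deriv T y) t + complex_of_real (q t) * y a
          = lam * y (sigma T t))"

definition bform ::
  "real set \<Rightarrow> real \<Rightarrow> real \<Rightarrow> real \<Rightarrow> real \<Rightarrow> (real \<Rightarrow> complex) \<Rightarrow> complex" where
  "bform T c11 c12 c21 c22 y =
     complex_of_real c11 * y (Inf T) + complex_of_real c12 * delta_deriv T y (Inf T)
   + complex_of_real c21 * y (rho T (Sup T)) + complex_of_real c22 * delta_deriv T y (rho T (Sup T))"

definition is_eigenvalue ::
  "real set \<Rightarrow> (real \<Rightarrow> real) \<Rightarrow> real \<Rightarrow> real \<Rightarrow> real \<Rightarrow> real \<Rightarrow> real
   \<Rightarrow> real \<Rightarrow> real \<Rightarrow> real \<Rightarrow> real \<Rightarrow> complex \<Rightarrow> bool" where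
  "is_eigenvalue T q a a11 a12 a21 a22 b11 b12 b21 b22 lam \<longleftrightarrow>
     (\<exists>y. is_solution T q a lam y \<and> (\<exists>t\<in>T. y t \<noteq> 0) \<and>
          bform T a11 a12 a21 a22 y = 0 \<and> bform T b11 b12 b21 b22 y = 0)"

end

theory Submission
  imports Defs
begin



lemma closure_sub_closed: "closed X \<Longrightarrow> S \<subseteq> X \<Longrightarrow> closure S \<subseteq> X"
  by (simp add: closure_minimal)

lemma sigma_props:
  assumes "closed X" "t \<in> X"
  shows "sigma X t \<in> X" "t \<le> sigma X t" "\<And>u. u \<in> X \<Longrightarrow> t < u \<Longrightarrow> sigma X t \<le> u"
proof -
  let ?S = "{s\<in>X. s > t}"
  have bS: "bdd_below ?S" by (rule bdd_belowI[of _ t]) auto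
  show "sigma X t \<in> X"
  proof (cases "\<exists>s\<in>X. s>t")
    case True
    hence ne: "?S \<noteq> {}" by auto
    have "Inf ?S \<in> closure ?S" by (rule closure_contains_Inf[OF ne bS])
    also have "closure ?S \<subseteq> X" using closure_sub_closed[OF assms(1)] by auto
    finally show ?thesis using True by (simp add: sigma_def)
  qed (simp add: sigma_def assms)
  show "t \<le> sigma X t" unfolding sigma_def by (auto intro: cInf_greatest)
  show "\<And>u. u \<in> X \<Longrightarrow> t < u \<Longrightarrow> sigma X t \<le> u" unfolding sigma_def using bS by (auto intro: cInf_lower)
qed

lemma sigma_eq:
  assumes "u \<in> X" "t < u" "\<And>v. v \<in> X \<Longrightarrow> t < v \<Longrightarrow> u \<le> v"
  shows "sigma X t = u"
  unfolding sigma_def using assms by (auto intro!: cInf_eq_minimum)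

lemma sigma_rd:
  assumes "u \<in> X" "t < u" "sigma X t = t" "e > 0"
  shows "\<exists>v\<in>X. t < v \<and> v < t + e"
proof -
  let ?S = "{s\<in>X. s > t}"
  have bS: "bdd_below ?S" by (rule bdd_belowI[of _ t]) auto
  have ne: "?S \<noteq> {}" using assms by auto
  have ex: "\<exists>s\<in>X. s > t" using assms by auto
  have "Inf ?S = t" using assms(3) ex unfolding sigma_def by simp
  hence "Inf ?S < t + e" using assms by simp
  then show ?thesis using cInf_less_iff[OF ne bS] by auto
qed

lemma rho_props:
  assumes "closed X" "t \<in> X"
  shows "rho X t \<in> X" "rho X t \<le> t" "\<And>u. u \<in> X \<Longrightarrow> u < t \<Longrightarrow> u \<le> rho X t"
proof -
  let ?S = "{s\<in>X. s < t}"
  have bS: "bdd_above ?S" by (rule bdd_aboveI[of _ t]) auto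
  show "rho X t \<in> X"
  proof (cases "\<exists>s\<in>X. s<t")
    case True
    hence ne: "?S \<noteq> {}" by auto
    have "Sup ?S \<in> closure ?S" by (rule closure_contains_Sup[OF ne bS])
    also have "closure ?S \<subseteq> X" using closure_sub_closed[OF assms(1)] by auto
    finally show ?thesis using True by (simp add: rho_def)
  qed (simp add: rho_def assms)
  show "rho X t \<le> t" unfolding rho_def by (auto intro: cSup_least)
  show "\<And>u. u \<in> X \<Longrightarrow> u < t \<Longrightarrow> u \<le> rho X t" unfolding rho_def using bS by (auto intro: cSup_upper)
qed

lemma rho_ld:
  assumes "u \<in> X" "u < t" "rho X t = t" "e > 0"
  shows "\<exists>v\<in>X. t - e < v \<and> v < t"
proof -
  let ?S = "{s\<in>X. s < t}"
  have bS: "bdd_above ?S" by (rule bdd_aboveI[of _ t]) auto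
  have ne: "?S \<noteq> {}" using assms by auto
  have ex: "\<exists>s\<in>X. s < t" using assms by auto
  have "Sup ?S = t" using assms(3) ex unfolding rho_def by simp
  hence "t - e < Sup ?S" using assms by simp
  then show ?thesis using less_cSup_iff[OF ne bS] by auto
qed

lemma Sup_props:
  fixes X :: "real set"
  assumes "closed X" "bounded X" "X \<noteq> {}"
  shows "Sup X \<in> X" "\<And>x. x \<in> X \<Longrightarrow> x \<le> Sup X"
  using closed_contains_Sup[OF assms(3) bounded_imp_bdd_above[OF assms(2)] assms(1)]
    cSup_upper[OF _ bounded_imp_bdd_above[OF assms(2)]] by auto

lemma Inf_props:
  fixes X :: "real set"
  assumes "closed X" "bounded X" "X \<noteq> {}"
  shows "Inf X \<in> X" "\<And>x. x \<in> X \<Longrightarrow> Inf X \<le> x"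
  using closed_contains_Inf[OF assms(3) bounded_imp_bdd_below[OF assms(2)] assms(1)]
    cInf_lower[OF _ bounded_imp_bdd_below[OF assms(2)]] by auto

lemma Tkappa_eq:
  fixes X :: "real set"
  assumes "closed X" "bounded X" "X \<noteq> {}"
  shows "Tkappa X = {t\<in>X. t \<le> rho X (Sup X)}"
  using Sup_props[OF assms] unfolding Tkappa_def by force

lemma Tkappa_sub: "Tkappa X \<subseteq> X" unfolding Tkappa_def by auto

lemma in_Tkappa:
  fixes X :: "real set"
  assumes "closed X" "bounded X" "t \<in> X" "t < Sup X"
  shows "t \<in> Tkappa X"
proof -
  have ne: "X \<noteq> {}" using assms by auto
  have "t \<le> rho X (Sup X)" using rho_props(3)[OF assms(1) Sup_props(1)[OF assms(1,2) ne]] assms by auto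
  thus ?thesis using Tkappa_eq[OF assms(1,2) ne] assms by auto
qed

lemma in_Tkappa_ld:
  fixes X :: "real set"
  assumes "closed X" "bounded X" "t \<in> X" "\<And>e. e > 0 \<Longrightarrow> \<exists>u\<in>X. t - e < u \<and> u < t"
  shows "t \<in> Tkappa X"
proof (cases "t < Sup X")
  case True thus ?thesis using in_Tkappa assms by auto
next
  case False
  have ne: "X \<noteq> {}" using assms by auto
  hence tS: "t = Sup X" using False Sup_props[OF assms(1,2) ne] assms(3) by force
  have "t \<le> rho X t"
  proof (rule ccontr)
    assume "\<not> t \<le> rho X t"
    then obtain u where u: "u \<in> X" "rho X t < u" "u < t" using assms(4)[of "t - rho X t"] by auto
    thus False using rho_props(3)[OF assms(1,3) u(1)] by auto
  qed
  thus ?thesis using Tkappa_eq[OF assms(1,2) ne] assms tS by auto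
qed

lemma le_eps_mult:
  fixes x c :: real
  assumes "\<And>e. e > 0 \<Longrightarrow> x \<le> e * c" "c \<ge> 0"
  shows "x \<le> 0"
proof (rule field_le_epsilon)
  fix e :: real assume e: "e > 0"
  have "e / (c+1) > 0" using e assms(2) by simp
  hence "x \<le> (e / (c+1)) * c" using assms(1) by blast
  also have "\<dots> \<le> e" using e assms(2) by (simp add: field_simps)
  finally show "x \<le> 0 + e" by simp
qed

lemma dd_jump:
  assumes "has_delta_derivative X f D t"
  shows "f (sigma X t) = f t + D * complex_of_real (sigma X t - t)"
proof -
  have tX: "t \<in> X" using assms Tkappa_sub unfolding has_delta_derivative_def by auto
  have "cmod (f (sigma X t) - f t - D * complex_of_real (sigma X t - t)) \<le> 0"
  proof (rule le_eps_mult)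
    fix e :: real assume "e > 0"
    then obtain d where "d > 0" "\<forall>s\<in>X. \<bar>s - t\<bar> < d \<longrightarrow>
        cmod (f (sigma X t) - f s - D * complex_of_real (sigma X t - s)) \<le> e * \<bar>sigma X t - s\<bar>"
      using assms unfolding has_delta_derivative_def by blast
    thus "cmod (f (sigma X t) - f t - D * complex_of_real (sigma X t - t)) \<le> e * \<bar>sigma X t - t\<bar>"
      using tX by auto
  qed auto
  thus ?thesis by (simp add: algebra_simps)
qed


lemma norm3: "norm (a - b + c) \<le> norm a + norm b + norm (c::complex)"
  by (smt (verit) norm_triangle_ineq norm_triangle_ineq4)

lemma dd_cont:
  assumes "has_delta_derivative X f D t" "e > 0"
  shows "\<exists>d>0. \<forall>u\<in>X. \<bar>u - t\<bar> < d \<longrightarrow> cmod (f u - f t) < e"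
proof -
  have tX: "t \<in> X" using assms Tkappa_sub unfolding has_delta_derivative_def by auto
  define m where "m = \<bar>sigma X t - t\<bar>"
  define e' where "e' = e / (2 * (2 * m + 1))"
  have m0: "m \<ge> 0" unfolding m_def by simp
  have e'0: "e' > 0" unfolding e'_def using assms m0 by simp
  obtain d1 where d1: "d1 > 0" "\<forall>s\<in>X. \<bar>s - t\<bar> < d1 \<longrightarrow>
        cmod (f (sigma X t) - f s - D * complex_of_real (sigma X t - s)) \<le> e' * \<bar>sigma X t - s\<bar>"
    using assms e'0 unfolding has_delta_derivative_def by blast
  define d where "d = min (min d1 1) (e / (2*(cmod D + 1)))"
  have "2*(cmod D + 1) > 0" by (smt (verit) norm_ge_zero)
  hence "e / (2*(cmod D + 1)) > 0" using assms(2) by simp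
  hence d0: "d > 0" unfolding d_def using d1 by simp
  show ?thesis
  proof (intro exI[of _ d] conjI ballI impI d0)
    fix u assume uX: "u \<in> X" and ud: "\<bar>u - t\<bar> < d"
    let ?A = "f (sigma X t) - f t - D * complex_of_real (sigma X t - t)"
    let ?B = "f (sigma X t) - f u - D * complex_of_real (sigma X t - u)"
    have eq: "f u - f t = ?A - ?B + D * complex_of_real (u - t)" by (simp add: algebra_simps)
    have hA: "cmod ?A \<le> e' * m" using d1 tX unfolding m_def by auto
    have hB: "cmod ?B \<le> e' * \<bar>sigma X t - u\<bar>" using d1 uX ud unfolding d_def by auto
    have "\<bar>sigma X t - u\<bar> \<le> m + 1" using ud unfolding m_def d_def by auto
    hence hB': "cmod ?B \<le> e' * (m + 1)" using hB e'0 by (smt (verit) mult_left_mono)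
    have "cmod (D * complex_of_real (u - t)) = cmod D * \<bar>u - t\<bar>" by (simp only: norm_mult norm_of_real)
    also have "\<dots> \<le> cmod D * (e / (2*(cmod D + 1)))" using ud unfolding d_def
      by (intro mult_left_mono) auto
    also have "\<dots> = (e/2) * (cmod D / (cmod D + 1))" by (simp add: field_simps)
    also have "\<dots> < (e/2) * 1"
    proof (rule mult_strict_left_mono)
      have "cmod D + 1 > 0" by (smt (verit) norm_ge_zero)
      thus "cmod D / (cmod D + 1) < 1" by simp
    qed (use assms in simp)
    also have "\<dots> = e / 2" by simp
    finally have hC: "cmod (D * complex_of_real (u - t)) < e / 2" .
    have "e' * m + e' * (m + 1) = e' * (2 * m + 1)" by (simp add: algebra_simps)
    also have "\<dots> = e / 2" unfolding e'_def using m0 by (simp add: field_simps)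
    finally have "e' * m + e' * (m + 1) = e / 2" .
    have "cmod (f u - f t) \<le> cmod ?A + cmod ?B + cmod (D * complex_of_real (u - t))"
      unfolding eq by (rule norm3)
    also have "\<dots> < e' * m + e' * (m + 1) + e / 2" using hA hB' hC by linarith
    also have "\<dots> = e" using \<open>e' * m + e' * (m + 1) = e / 2\<close> by simp
    finally show "cmod (f u - f t) < e" .
  qed
qed

lemma dd_unique:
  fixes X :: "real set"
  assumes "closed X" "bounded X" "u0 \<in> X" "u0 \<noteq> t"
    "has_delta_derivative X f D1 t" "has_delta_derivative X f D2 t"
  shows "D1 = D2"
proof -
  have tT: "t \<in> Tkappa X" using assms unfolding has_delta_derivative_def by auto
  hence tX: "t \<in> X" using Tkappa_sub by auto
  show ?thesis
  proof (cases "sigma X t = t")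
    case False
    have j1: "f (sigma X t) = f t + D1 * complex_of_real (sigma X t - t)"
      using dd_jump assms(5) by blast
    have j2: "f (sigma X t) = f t + D2 * complex_of_real (sigma X t - t)"
      using dd_jump assms(6) by blast
    have "D1 * complex_of_real (sigma X t - t) = f (sigma X t) - f t" using j1 by simp
    moreover have "D2 * complex_of_real (sigma X t - t) = f (sigma X t) - f t" using j2 by simp
    ultimately have "D1 * complex_of_real (sigma X t - t) = D2 * complex_of_real (sigma X t - t)" by simp
    moreover have "complex_of_real (sigma X t - t) \<noteq> 0" using False by simp
    ultimately show ?thesis by simp
  next
    case True
    have approx: "\<exists>v\<in>X. v \<noteq> t \<and> \<bar>v - t\<bar> < e" if e: "e > 0" for e
    proof (cases "\<exists>u\<in>X. u > t")
      case True
      then obtain u where "u \<in> X" "u > t" by auto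
      from sigma_rd[OF this \<open>sigma X t = t\<close> e] show ?thesis by force
    next
      case False
      have ne: "X \<noteq> {}" using tX by auto
      have tS: "t = Sup X" using Sup_props[OF assms(1,2) ne] False tX by force
      have "t \<le> rho X (Sup X)" using tT Tkappa_eq[OF assms(1,2) ne] by auto
      hence rt: "rho X t = t" using rho_props(2)[OF assms(1) tX] tS by auto
      have "u0 < t" using False assms(3,4) by force
      from rho_ld[OF assms(3) this rt e] show ?thesis by force
    qed
    show ?thesis
    proof (rule ccontr)
      assume ne: "D1 \<noteq> D2"
      define k where "k = cmod (D1 - D2)"
      have k0: "k > 0" unfolding k_def using ne by simp
      have k4: "k/4 > 0" using k0 by simp
      obtain d1 where d1: "d1 > 0" "\<forall>s\<in>X. \<bar>s - t\<bar> < d1 \<longrightarrow>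
          cmod (f (sigma X t) - f s - D1 * complex_of_real (sigma X t - s)) \<le> k/4 * \<bar>sigma X t - s\<bar>"
        using assms(5) k4 unfolding has_delta_derivative_def by blast
      obtain d2 where d2: "d2 > 0" "\<forall>s\<in>X. \<bar>s - t\<bar> < d2 \<longrightarrow>
          cmod (f (sigma X t) - f s - D2 * complex_of_real (sigma X t - s)) \<le> k/4 * \<bar>sigma X t - s\<bar>"
        using assms(6) k4 unfolding has_delta_derivative_def by blast
      obtain v where v: "v \<in> X" "v \<noteq> t" "\<bar>v - t\<bar> < min d1 d2" using approx[of "min d1 d2"] d1 d2 by auto
      let ?A = "f t - f v - D1 * complex_of_real (t - v)"
      let ?B = "f t - f v - D2 * complex_of_real (t - v)"
      have "\<bar>v - t\<bar> < d1" "\<bar>v - t\<bar> < d2" using v by auto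
      hence "cmod (f (sigma X t) - f v - D1 * complex_of_real (sigma X t - v)) \<le> k/4 * \<bar>sigma X t - v\<bar>"
        "cmod (f (sigma X t) - f v - D2 * complex_of_real (sigma X t - v)) \<le> k/4 * \<bar>sigma X t - v\<bar>"
        using d1(2) d2(2) v(1) by blast+
      hence hA: "cmod ?A \<le> k/4 * \<bar>t - v\<bar>" and hB: "cmod ?B \<le> k/4 * \<bar>t - v\<bar>"
        unfolding True by blast+
      have "(D1 - D2) * complex_of_real (t - v) = ?B - ?A" by (simp add: algebra_simps)
      hence "k * \<bar>t - v\<bar> = cmod (?B - ?A)" unfolding k_def by (metis norm_mult norm_of_real)
      also have "\<dots> \<le> cmod ?B + cmod ?A" by (rule norm_triangle_ineq4)
      finally have "k * \<bar>t - v\<bar> \<le> k/2 * \<bar>t - v\<bar>" using hA hB by simp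
      moreover have "\<bar>t - v\<bar> > 0" using v by simp
      ultimately have "k \<le> k/2" using mult_le_cancel_right_pos by blast
      thus False using k0 by linarith
    qed
  qed
qed

lemma delta_deriv_eq:
  fixes X :: "real set"
  assumes "closed X" "bounded X" "u0 \<in> X" "u0 \<noteq> t" "has_delta_derivative X f D t"
  shows "delta_deriv X f t = D"
proof -
  have u: "\<And>D'. has_delta_derivative X f D' t \<Longrightarrow> D' = D"
    using dd_unique[OF assms(1-4) _ assms(5)] by blast
  show ?thesis unfolding delta_deriv_def using assms(5) u by (rule the_equality)
qed




lemma has_comb:
  assumes "has_delta_derivative X f D t" "has_delta_derivative X g E t"
  shows "has_delta_derivative X (\<lambda>x. c * f x + d * g x) (c * D + d * E) t"
  unfolding has_delta_derivative_def
proof (intro conjI allI impI)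
  show "t \<in> Tkappa X" using assms unfolding has_delta_derivative_def by auto
  fix e :: real assume e: "e > 0"
  define e1 where "e1 = e / (2 * (cmod c + 1))"
  define e2 where "e2 = e / (2 * (cmod d + 1))"
  have pc: "2 * (cmod c + 1) > 0" by (smt (verit) norm_ge_zero)
  have pd: "2 * (cmod d + 1) > 0" by (smt (verit) norm_ge_zero)
  have e1: "e1 > 0" "cmod c * e1 \<le> e/2" unfolding e1_def using e pc
    by (auto simp: field_simps intro!: divide_pos_pos)
  have e2: "e2 > 0" "cmod d * e2 \<le> e/2" unfolding e2_def using e pd
    by (auto simp: field_simps intro!: divide_pos_pos)
  obtain d1 where d1: "d1 > 0" "\<forall>s\<in>X. \<bar>s - t\<bar> < d1 \<longrightarrow>
          cmod (f (sigma X t) - f s - D * complex_of_real (sigma X t - s)) \<le> e1 * \<bar>sigma X t - s\<bar>"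
    using assms(1) e1 unfolding has_delta_derivative_def by blast
  obtain d2 where d2: "d2 > 0" "\<forall>s\<in>X. \<bar>s - t\<bar> < d2 \<longrightarrow>
          cmod (g (sigma X t) - g s - E * complex_of_real (sigma X t - s)) \<le> e2 * \<bar>sigma X t - s\<bar>"
    using assms(2) e2 unfolding has_delta_derivative_def by blast
  show "\<exists>\<delta>>0. \<forall>s\<in>X. \<bar>s - t\<bar> < \<delta> \<longrightarrow>
          cmod (c * f (sigma X t) + d * g (sigma X t) - (c * f s + d * g s) -
                (c * D + d * E) * complex_of_real (sigma X t - s)) \<le> e * \<bar>sigma X t - s\<bar>"
  proof (intro exI[of _ "min d1 d2"] conjI ballI impI)
    show "min d1 d2 > 0" using d1 d2 by simp
    fix s assume sX: "s \<in> X" and sd: "\<bar>s - t\<bar> < min d1 d2"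
    let ?A = "f (sigma X t) - f s - D * complex_of_real (sigma X t - s)"
    let ?B = "g (sigma X t) - g s - E * complex_of_real (sigma X t - s)"
    let ?m = "\<bar>sigma X t - s\<bar>"
    have eq: "c * f (sigma X t) + d * g (sigma X t) - (c * f s + d * g s) -
                (c * D + d * E) * complex_of_real (sigma X t - s) = c * ?A + d * ?B"
      by (simp add: algebra_simps)
    have hA: "cmod ?A \<le> e1 * ?m" using d1 sX sd by auto
    have hB: "cmod ?B \<le> e2 * ?m" using d2 sX sd by auto
    have "cmod (c * ?A + d * ?B) \<le> cmod c * cmod ?A + cmod d * cmod ?B"
      by (metis norm_mult norm_triangle_ineq)
    also have "\<dots> \<le> cmod c * (e1 * ?m) + cmod d * (e2 * ?m)"
      using hA hB by (intro add_mono mult_left_mono) auto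
    also have "\<dots> = (cmod c * e1) * ?m + (cmod d * e2) * ?m" by simp
    also have "\<dots> \<le> (e/2) * ?m + (e/2) * ?m"
      using e1 e2 by (intro add_mono mult_right_mono) auto
    also have "\<dots> = e * ?m" by simp
    finally show "cmod (c * f (sigma X t) + d * g (sigma X t) - (c * f s + d * g s) -
                (c * D + d * E) * complex_of_real (sigma X t - s)) \<le> e * ?m" unfolding eq .
  qed
qed

lemma has_cong:
  assumes "closed X" "has_delta_derivative X f D t" "\<And>x. x \<in> X \<Longrightarrow> f x = g x"
  shows "has_delta_derivative X g D t"
proof -
  have tX: "t \<in> X" using assms Tkappa_sub unfolding has_delta_derivative_def by auto
  have sX: "sigma X t \<in> X" using sigma_props(1)[OF assms(1) tX] .
  show ?thesis using assms(2) unfolding has_delta_derivative_def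
    using assms(3) sX by (metis (no_types, lifting))
qed




lemma mvi:
  fixes X :: "real set" and f :: "real \<Rightarrow> complex"
  assumes X: "closed X" and rX: "r \<in> X" and sX: "s \<in> X" and rs: "r \<le> s"
    and der: "\<And>v. v \<in> X \<Longrightarrow> r \<le> v \<Longrightarrow> v \<le> s \<Longrightarrow> has_delta_derivative X f (f' v) v"
    and bnd: "\<And>v. v \<in> X \<Longrightarrow> r \<le> v \<Longrightarrow> v < s \<Longrightarrow> cmod (f' v) \<le> K"
  shows "cmod (f s - f r) \<le> K * (s - r)"
proof (cases "r = s")
  case True thus ?thesis by simp
next
  case False
  hence rs': "r < s" using rs by simp
  have K0: "K \<ge> 0" using bnd[OF rX _ rs'] by (smt (verit) norm_ge_zero)
  have main: "cmod (f s - f r) \<le> (K + e) * (s - r)" if e: "e > 0" for e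
  proof (rule ccontr)
    assume nP: "\<not> cmod (f s - f r) \<le> (K + e) * (s - r)"
    define P where "P t \<longleftrightarrow> cmod (f t - f r) \<le> (K + e) * (t - r)" for t
    define A where "A = {t \<in> X. r \<le> t \<and> t \<le> s \<and> \<not> P t}"
    have sA: "s \<in> A" using nP sX rs unfolding A_def P_def by auto
    have Ane: "A \<noteq> {}" using sA by auto
    have bA: "bdd_below A" unfolding A_def by (rule bdd_belowI[of _ r]) auto
    define ts where "ts = Inf A"
    have "ts \<in> closure A" unfolding ts_def by (rule closure_contains_Inf[OF Ane bA])
    also have "closure A \<subseteq> X" using closure_sub_closed[OF X] unfolding A_def by auto
    finally have tsX: "ts \<in> X" .
    have rts: "r \<le> ts" unfolding ts_def using Ane by (intro cInf_greatest) (auto simp: A_def)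
    have tss: "ts \<le> s" unfolding ts_def using sA bA by (rule cInf_lower)
    have below: "P x" if "x \<in> X" "r \<le> x" "x < ts" for x
    proof (rule ccontr)
      assume "\<not> P x"
      hence "x \<in> A" using that tss unfolding A_def by auto
      hence "ts \<le> x" unfolding ts_def using bA by (rule cInf_lower)
      thus False using that by simp
    qed
    have Pts: "P ts"
    proof (cases "ts = r")
      case True then show ?thesis by (simp add: P_def)
    next
      case False
      hence rlt: "r < ts" using rts by simp
      define L where "L = {x\<in>X. x < ts}"
      have rL: "r \<in> L" using rX rlt unfolding L_def by auto
      have bL: "bdd_above L" unfolding L_def by (rule bdd_aboveI[of _ ts]) auto
      have Lne: "L \<noteq> {}" using rL by auto
      define r' where "r' = Sup L"
      have "r' \<in> closure L" unfolding r'_def by (rule closure_contains_Sup[OF Lne bL])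
      also have "closure L \<subseteq> X" using closure_sub_closed[OF X] unfolding L_def by auto
      finally have r'X: "r' \<in> X" .
      have rr': "r \<le> r'" unfolding r'_def using rL bL by (rule cSup_upper)
      have r'ts: "r' \<le> ts" unfolding r'_def using Lne by (intro cSup_least) (auto simp: L_def)
      show ?thesis
      proof (cases "r' < ts")
        case True
        have Pr': "P r'" using below r'X rr' True by auto
        have sig: "sigma X r' = ts"
        proof (rule sigma_eq[OF tsX True])
          fix v assume "v \<in> X" "r' < v"
          show "ts \<le> v"
          proof (rule ccontr)
            assume "\<not> ts \<le> v"
            hence "v \<in> L" using \<open>v \<in> X\<close> unfolding L_def by auto
            hence "v \<le> r'" unfolding r'_def using bL by (rule cSup_upper)
            thus False using \<open>r' < v\<close> by simp
          qed
        qed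
        have dr: "has_delta_derivative X f (f' r') r'" using der r'X rr' True tss by auto
        have jump: "f ts = f r' + f' r' * complex_of_real (ts - r')" using dd_jump[OF dr] sig by simp
        have bd: "cmod (f' r') \<le> K" using bnd r'X rr' True tss by auto
        have "f ts - f r = (f r' - f r) + f' r' * complex_of_real (ts - r')"
          unfolding jump by (simp add: algebra_simps)
        hence "cmod (f ts - f r) = cmod ((f r' - f r) + f' r' * complex_of_real (ts - r'))" by (rule arg_cong)
        also have "\<dots> \<le> cmod (f r' - f r) + cmod (f' r') * (ts - r')"
        proof -
          have "cmod (f' r' * complex_of_real (ts - r')) = cmod (f' r') * \<bar>ts - r'\<bar>"
            by (simp only: norm_mult norm_of_real)
          hence n1: "cmod (f' r' * complex_of_real (ts - r')) = cmod (f' r') * (ts - r')" using True by simp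
          show ?thesis using norm_triangle_ineq[of "f r' - f r" "f' r' * complex_of_real (ts - r')"] n1 by simp
        qed
        also have "\<dots> \<le> (K + e) * (r' - r) + K * (ts - r')"
          using Pr' bd True unfolding P_def by (intro add_mono mult_right_mono) auto
        also have "\<dots> \<le> (K + e) * (ts - r)"
        proof -
          have "e * (ts - r') \<ge> 0" using e True by simp
          thus ?thesis by (simp add: algebra_simps)
        qed
        finally show ?thesis unfolding P_def .
      next
        case False
        hence r'eq: "r' = ts" using r'ts by simp
        have dts: "has_delta_derivative X f (f' ts) ts" using der tsX rts tss by auto
        show ?thesis unfolding P_def
        proof (rule field_le_epsilon)
          fix \<eta> :: real assume \<eta>: "\<eta> > 0"
          obtain d where d: "d > 0" "\<forall>u\<in>X. \<bar>u - ts\<bar> < d \<longrightarrow> cmod (f u - f ts) < \<eta>"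
            using dd_cont[OF dts \<eta>] by blast
          have "ts - min d (ts - r) < Sup L" using r'eq d rlt unfolding r'_def by simp
          then obtain x where x: "x \<in> L" "ts - min d (ts - r) < x" using less_cSup_iff[OF Lne bL] by auto
          have xX: "x \<in> X" "x < ts" using x unfolding L_def by auto
          have xr: "r \<le> x" using x by simp
          have Px: "P x" using below xX xr by auto
          have cx: "cmod (f ts - f x) < \<eta>" using d xX x by (auto simp: norm_minus_commute)
          have "cmod (f ts - f r) \<le> cmod (f x - f r) + cmod (f ts - f x)"
            using norm_triangle_ineq[of "f x - f r" "f ts - f x"] by simp
          also have "\<dots> \<le> (K + e) * (x - r) + \<eta>" using Px cx unfolding P_def by simp
          also have "\<dots> \<le> (K + e) * (ts - r) + \<eta>"
            using xX K0 e by (intro add_mono mult_left_mono) auto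
          finally show "cmod (f ts - f r) \<le> (K + e) * (ts - r) + \<eta>" .
        qed
      qed
    qed
    have tsnA: "ts \<notin> A" using Pts unfolding A_def by auto
    have tslt: "ts < s" using tss tsnA sA by (cases "ts = s") auto
    have dts: "has_delta_derivative X f (f' ts) ts" using der tsX rts tss by auto
    have bts: "cmod (f' ts) \<le> K" using bnd tsX rts tslt by auto
    have approach: "\<exists>u\<in>A. ts < u \<and> u < ts + \<epsilon>" if "\<epsilon> > 0" for \<epsilon>
    proof -
      have "Inf A < ts + \<epsilon>" using that unfolding ts_def by simp
      then obtain u where "u \<in> A" "u < ts + \<epsilon>" using cInf_less_iff[OF Ane bA] by auto
      moreover have "ts \<le> u" unfolding ts_def using \<open>u \<in> A\<close> bA by (rule cInf_lower)
      moreover have "u \<noteq> ts" using tsnA \<open>u \<in> A\<close> by auto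
      ultimately have "ts < u" by simp
      thus ?thesis using \<open>u \<in> A\<close> \<open>u < ts + \<epsilon>\<close> by blast
    qed
    have sig: "sigma X ts = ts"
    proof (rule ccontr)
      assume "sigma X ts \<noteq> ts"
      hence "sigma X ts > ts" using sigma_props(2)[OF X tsX] by simp
      then obtain u where "u \<in> A" "ts < u" "u < ts + (sigma X ts - ts)" using approach[of "sigma X ts - ts"] by auto
      moreover have "u \<in> X" using \<open>u \<in> A\<close> unfolding A_def by auto
      ultimately show False using sigma_props(3)[OF X tsX, of u] by simp
    qed
    obtain d where d: "d > 0" "\<forall>u\<in>X. \<bar>u - ts\<bar> < d \<longrightarrow>
        cmod (f (sigma X ts) - f u - f' ts * complex_of_real (sigma X ts - u)) \<le> e * \<bar>sigma X ts - u\<bar>"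
      using dts e unfolding has_delta_derivative_def by blast
    obtain u where u: "u \<in> A" "ts < u" "u < ts + d" using approach d by auto
    have uX: "u \<in> X" using u unfolding A_def by auto
    have "cmod (f ts - f u - f' ts * complex_of_real (ts - u)) \<le> e * \<bar>ts - u\<bar>"
      using d(2) uX u sig by auto
    hence h1: "cmod (f ts - f u - f' ts * complex_of_real (ts - u)) \<le> e * (u - ts)" using u by simp
    have eq: "f u - f ts = - (f ts - f u - f' ts * complex_of_real (ts - u)) + f' ts * complex_of_real (u - ts)"
      by (simp add: algebra_simps)
    have "cmod (f u - f ts) \<le> cmod (f ts - f u - f' ts * complex_of_real (ts - u)) + cmod (f' ts * complex_of_real (u - ts))"
      unfolding eq using norm_triangle_ineq[of "- (f ts - f u - f' ts * complex_of_real (ts - u))" "f' ts * complex_of_real (u - ts)"]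
      by (simp only: norm_minus_cancel)
    also have "\<dots> \<le> e * (u - ts) + K * (u - ts)"
    proof -
      have "cmod (f' ts * complex_of_real (u - ts)) = cmod (f' ts) * \<bar>u - ts\<bar>"
        by (simp only: norm_mult norm_of_real)
      also have "\<dots> = cmod (f' ts) * (u - ts)" using u by simp
      also have "\<dots> \<le> K * (u - ts)" using bts u by (intro mult_right_mono) auto
      finally show ?thesis using h1 by simp
    qed
    finally have h2: "cmod (f u - f ts) \<le> (K + e) * (u - ts)" by (simp add: algebra_simps)
    have "cmod (f u - f r) \<le> cmod (f ts - f r) + cmod (f u - f ts)"
      using norm_triangle_ineq[of "f ts - f r" "f u - f ts"] by simp
    also have "\<dots> \<le> (K + e) * (ts - r) + (K + e) * (u - ts)" using Pts h2 unfolding P_def by simp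
    also have "\<dots> = (K + e) * (u - r)" by (simp add: algebra_simps)
    finally have "P u" unfolding P_def .
    thus False using u unfolding A_def by auto
  qed
  show ?thesis
  proof (rule field_le_epsilon)
    fix \<eta> :: real assume \<eta>: "\<eta> > 0"
    define e where "e = \<eta> / (s - r + 1)"
    have e0: "e > 0" unfolding e_def using \<eta> rs by simp
    have "cmod (f s - f r) \<le> (K + e) * (s - r)" using main e0 by blast
    also have "\<dots> = K * (s - r) + \<eta> * ((s - r) / (s - r + 1))" unfolding e_def by (simp add: algebra_simps)
    also have "\<dots> \<le> K * (s - r) + \<eta> * 1"
      using \<eta> rs by (intro add_left_mono mult_left_mono) auto
    finally show "cmod (f s - f r) \<le> K * (s - r) + \<eta>" by simp
  qed
qed




lemma zero_by_eps:
  assumes "\<And>e. e > 0 \<Longrightarrow> cmod (c::complex) < e"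
  shows "c = 0"
proof -
  have "cmod c \<le> 0" by (rule field_le_epsilon) (use assms in force)
  thus ?thesis by simp
qed

lemma small_lemma:
  fixes h L :: real
  assumes "0 < h" "h * (L + 1) \<le> 1" "h \<le> 1" "L \<ge> 0"
  shows "h * h * L < 1"
proof -
  have "h * L < 1" using assms by (simp add: algebra_simps)
  moreover have "h * h * L \<le> h * L" using assms by (simp add: mult_right_le_one_le mult_le_cancel_right1 mult_left_le_one_le)
  ultimately show ?thesis by simp
qed

locale dyn =
  fixes T :: "real set" and z w :: "real \<Rightarrow> complex" and lam :: complex and \<beta> :: real and T' :: "real set"
  assumes cT: "closed T" and bT: "bounded T" and neT: "T \<noteq> {}"
    and beta: "\<beta> = rho T (Sup T)" and T'def: "T' = {t\<in>T. t \<le> \<beta>}"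
    and hz: "\<And>t. t \<in> T' \<Longrightarrow> has_delta_derivative T z (w t) t"
    and hw: "\<And>t. t \<in> Tkappa T' \<Longrightarrow> has_delta_derivative T' w (- lam * z (sigma T t)) t"
begin

lemma M_in: "Sup T \<in> T" and le_M: "t \<in> T \<Longrightarrow> t \<le> Sup T"
  using Sup_props[OF cT bT neT] by auto

lemma beta_T: "\<beta> \<in> T" and beta_le: "\<beta> \<le> Sup T" and below_M: "u \<in> T \<Longrightarrow> u < Sup T \<Longrightarrow> u \<le> \<beta>"
  using rho_props[OF cT M_in] beta by auto

lemma T'_closed: "closed T'"
proof -
  have "T' = T \<inter> {..\<beta>}" unfolding T'def by auto
  thus ?thesis using cT by (simp add: closed_Int)
qed

lemma T'_sub: "T' \<subseteq> T" unfolding T'def by auto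
lemma T'_bounded: "bounded T'" using bT T'_sub bounded_subset by blast
lemma beta_T': "\<beta> \<in> T'" unfolding T'def using beta_T by auto
lemma Sup_T': "Sup T' = \<beta>"
  by (rule cSup_eq_maximum[OF beta_T']) (auto simp: T'def)
lemma T'_eq: "Tkappa T = T'"
  using Tkappa_eq[OF cT bT neT] beta T'def by simp

lemma kap_lt: "t \<in> T' \<Longrightarrow> t < \<beta> \<Longrightarrow> t \<in> Tkappa T'"
  using in_Tkappa[OF T'_closed T'_bounded] Sup_T' by auto

lemma kap_ld: "t \<in> T' \<Longrightarrow> (\<And>e. e > 0 \<Longrightarrow> \<exists>u\<in>T'. t - e < u \<and> u < t) \<Longrightarrow> t \<in> Tkappa T'"
  using in_Tkappa_ld[OF T'_closed T'_bounded] by auto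

lemma kap_sub: "Tkappa T' \<subseteq> T'" by (rule Tkappa_sub)

lemma local_zero:
  assumes cd: "c < d"
    and IT': "\<And>u. u \<in> T \<Longrightarrow> c \<le> u \<Longrightarrow> u \<le> d \<Longrightarrow> u \<in> Tkappa T'"
    and bnd: "\<And>u. u \<in> T \<Longrightarrow> c \<le> u \<Longrightarrow> u \<le> d \<Longrightarrow> cmod (z u) \<le> B \<and> cmod (w u) \<le> B"
    and small: "(d - c) * (d - c) * cmod lam < 1"
    and ends: "(c \<in> T \<and> z c = 0 \<and> w c = 0) \<or> (d \<in> T \<and> z d = 0 \<and> w d = 0)"
  shows "\<And>u. u \<in> T \<Longrightarrow> c \<le> u \<Longrightarrow> u \<le> d \<Longrightarrow> z u = 0 \<and> w u = 0"
proof -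
  define I where "I = {u\<in>T. c \<le> u \<and> u \<le> d}"
  define h where "h = d - c"
  have h0: "h > 0" unfolding h_def using cd by simp
  have "c \<in> I \<or> d \<in> I" using ends cd unfolding I_def by auto
  hence Ine: "I \<noteq> {}" by auto
  have IT'': "u \<in> T'" if "u \<in> I" for u using IT' kap_sub that unfolding I_def by auto
  define mz where "mz = Sup ((\<lambda>u. cmod (z u)) ` I)"
  define mw where "mw = Sup ((\<lambda>u. cmod (w u)) ` I)"
  have bz: "bdd_above ((\<lambda>u. cmod (z u)) ` I)" using bnd unfolding I_def by (intro bdd_aboveI[of _ B]) auto
  have bw: "bdd_above ((\<lambda>u. cmod (w u)) ` I)" using bnd unfolding I_def by (intro bdd_aboveI[of _ B]) auto
  have zle: "cmod (z u) \<le> mz" if "u \<in> I" for u unfolding mz_def using bz that by (intro cSup_upper) auto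
  have wle: "cmod (w u) \<le> mw" if "u \<in> I" for u unfolding mw_def using bw that by (intro cSup_upper) auto
  obtain u0 where u0: "u0 \<in> I" using Ine by blast
  have mz0: "mz \<ge> 0" using zle[OF u0] norm_ge_zero[of "z u0"] by linarith
  have mw0: "mw \<ge> 0" using wle[OF u0] norm_ge_zero[of "w u0"] by linarith
  have claim: "cmod (z u) \<le> mw * h \<and> cmod (w u) \<le> cmod lam * mz * h" if uI: "u \<in> I" for u
  proof -
    have mvz: "cmod (z s - z r) \<le> mw * (s - r)" if "r \<in> I" "s \<in> I" "r \<le> s" for r s
    proof (rule mvi[OF cT])
      show "r \<in> T" "s \<in> T" "r \<le> s" using that unfolding I_def by auto
      show "has_delta_derivative T z (w v) v" if "v \<in> T" "r \<le> v" "v \<le> s" for v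
        using hz IT'' that \<open>r \<in> I\<close> \<open>s \<in> I\<close> unfolding I_def by auto
      show "cmod (w v) \<le> mw" if "v \<in> T" "r \<le> v" "v < s" for v
        using wle that \<open>r \<in> I\<close> \<open>s \<in> I\<close> unfolding I_def by auto
    qed
    have mvw: "cmod (w s - w r) \<le> (cmod lam * mz) * (s - r)" if "r \<in> I" "s \<in> I" "r \<le> s" for r s
    proof (rule mvi[OF T'_closed, where f' = "\<lambda>v. - lam * z (sigma T v)"])
      show "r \<in> T'" "s \<in> T'" "r \<le> s" using that IT'' by auto
      show "has_delta_derivative T' w (- lam * z (sigma T v)) v" if "v \<in> T'" "r \<le> v" "v \<le> s" for v
      proof (rule hw, rule IT')
        show "v \<in> T" "c \<le> v" "v \<le> d" using that \<open>r \<in> I\<close> \<open>s \<in> I\<close> T'_sub unfolding I_def by auto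
      qed
      show "cmod (- lam * z (sigma T v)) \<le> cmod lam * mz" if "v \<in> T'" "r \<le> v" "v < s" for v
      proof -
        have vT: "v \<in> T" using that T'_sub by auto
        have sT: "s \<in> T" using \<open>s \<in> I\<close> unfolding I_def by auto
        have "sigma T v \<in> T" "v \<le> sigma T v" "sigma T v \<le> s"
          using sigma_props[OF cT vT] sT that by auto
        hence "sigma T v \<in> I" using \<open>r \<in> I\<close> \<open>s \<in> I\<close> that vT unfolding I_def by auto
        hence "cmod (z (sigma T v)) \<le> mz" by (rule zle)
        hence "cmod lam * cmod (z (sigma T v)) \<le> cmod lam * mz" by (rule mult_left_mono) simp
        thus ?thesis by (simp add: norm_mult)
      qed
    qed
    have uc: "c \<le> u" "u \<le> d" using uI unfolding I_def by auto
    from ends show ?thesis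
    proof
      assume c0: "c \<in> T \<and> z c = 0 \<and> w c = 0"
      hence cI: "c \<in> I" unfolding I_def using cd by auto
      have "cmod (z u) \<le> mw * (u - c)" using mvz[OF cI uI uc(1)] c0 by simp
      also have "\<dots> \<le> mw * h" unfolding h_def using mw0 uc by (intro mult_left_mono) auto
      finally have 1: "cmod (z u) \<le> mw * h" .
      have "cmod (w u) \<le> cmod lam * mz * (u - c)" using mvw[OF cI uI uc(1)] c0 by simp
      also have "\<dots> \<le> cmod lam * mz * h" unfolding h_def using mz0 uc by (intro mult_left_mono) auto
      finally show ?thesis using 1 by simp
    next
      assume d0: "d \<in> T \<and> z d = 0 \<and> w d = 0"
      hence dI: "d \<in> I" unfolding I_def using cd by auto
      have "cmod (z u) \<le> mw * (d - u)" using mvz[OF uI dI uc(2)] d0 by (simp add: norm_minus_commute)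
      also have "\<dots> \<le> mw * h" unfolding h_def using mw0 uc by (intro mult_left_mono) auto
      finally have 1: "cmod (z u) \<le> mw * h" .
      have "cmod (w u) \<le> cmod lam * mz * (d - u)" using mvw[OF uI dI uc(2)] d0 by (simp add: norm_minus_commute)
      also have "\<dots> \<le> cmod lam * mz * h" unfolding h_def using mz0 uc by (intro mult_left_mono) auto
      finally show ?thesis using 1 by simp
    qed
  qed
  have mzle: "mz \<le> mw * h" unfolding mz_def using Ine claim by (intro cSup_least) auto
  have mwle: "mw \<le> cmod lam * mz * h" unfolding mw_def using Ine claim by (intro cSup_least) auto
  have "mw * h \<le> (cmod lam * mz * h) * h" using mwle h0 by (intro mult_right_mono) auto
  hence "mz \<le> (cmod lam * mz * h) * h" using mzle by linarith
  hence le0: "mz * (1 - h * h * cmod lam) \<le> 0" by (simp add: algebra_simps)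
  have pos: "1 - h * h * cmod lam > 0" using small unfolding h_def by simp
  have mzz: "mz = 0"
  proof (rule ccontr)
    assume "mz \<noteq> 0"
    hence "mz > 0" using mz0 by simp
    hence "mz * (1 - h * h * cmod lam) > 0" using pos by (rule mult_pos_pos)
    thus False using le0 by simp
  qed
  hence mwz: "mw = 0" using mwle mw0 by simp
  fix u assume "u \<in> T" "c \<le> u" "u \<le> d"
  hence uI: "u \<in> I" unfolding I_def by auto
  show "z u = 0 \<and> w u = 0" using zle[OF uI] wle[OF uI] mzz mwz by simp
qed

end




context dyn
begin

definition P where "P t \<longleftrightarrow> z t = 0 \<and> (t \<in> T' \<longrightarrow> w t = 0)"

lemma choose_h:
  fixes d1 d2 :: real
  assumes "d1 > 0" "d2 > 0"
  obtains h where "h > 0" "h < d1" "h < d2" "h * h * cmod lam < 1"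
proof -
  define h where "h = min (min d1 d2) (1 / (cmod lam + 1)) / 2"
  have L: "cmod lam + 1 > 0" by (smt (verit) norm_ge_zero)
  have h0: "h > 0" unfolding h_def using assms L by simp
  have h1: "h \<le> 1 / (cmod lam + 1) / 2" unfolding h_def by (intro divide_right_mono) auto
  have "h * (cmod lam + 1) \<le> 1 / (cmod lam + 1) / 2 * (cmod lam + 1)"
    using h1 L by (intro mult_right_mono) auto
  also have "\<dots> = 1/2" using L by simp
  finally have hL: "h * (cmod lam + 1) \<le> 1" by simp
  have "1 / (cmod lam + 1) \<le> 1" using L by (simp add: field_simps)
  moreover have "\<forall>q::real. q \<le> 1 \<longrightarrow> h \<le> q / 2 \<longrightarrow> h \<le> 1" by auto
  ultimately have "h \<le> 1" using h1 by blast
  hence "h * h * cmod lam < 1" using small_lemma[OF h0 hL] by simp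
  moreover have "h < d1" "h < d2" unfolding h_def using assms by auto
  ultimately show ?thesis using that h0 by blast
qed

lemma forward:
  assumes aT': "a \<in> T'" and za: "z a = 0" and wa: "w a = 0"
  shows "\<And>t. t \<in> T \<Longrightarrow> a \<le> t \<Longrightarrow> P t"
proof (rule ccontr)
  fix t0 assume t0: "t0 \<in> T" "a \<le> t0" "\<not> P t0"
  define A where "A = {t\<in>T. a \<le> t \<and> \<not> P t}"
  have aT: "a \<in> T" using aT' T'_sub by auto
  have Ane: "A \<noteq> {}" using t0 unfolding A_def by auto
  have bA: "bdd_below A" unfolding A_def by (rule bdd_belowI[of _ a]) auto
  define ts where "ts = Inf A"
  have "ts \<in> closure A" unfolding ts_def by (rule closure_contains_Inf[OF Ane bA])
  also have "closure A \<subseteq> T" using closure_sub_closed[OF cT] unfolding A_def by auto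
  finally have tsT: "ts \<in> T" .
  have ats: "a \<le> ts" unfolding ts_def using Ane by (intro cInf_greatest) (auto simp: A_def)
  have below: "P x" if "x \<in> T" "a \<le> x" "x < ts" for x
  proof (rule ccontr)
    assume "\<not> P x"
    hence "x \<in> A" using that unfolding A_def by auto
    hence "ts \<le> x" unfolding ts_def using bA by (rule cInf_lower)
    thus False using that by simp
  qed
  have Pts: "P ts"
  proof (cases "ts = a")
    case True thus ?thesis using za wa by (simp add: P_def)
  next
    case False
    hence alt: "a < ts" using ats by simp
    define L where "L = {x\<in>T. x < ts}"
    have aL: "a \<in> L" using aT alt unfolding L_def by auto
    have bL: "bdd_above L" unfolding L_def by (rule bdd_aboveI[of _ ts]) auto
    have Lne: "L \<noteq> {}" using aL by auto
    define r' where "r' = Sup L"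
    have "r' \<in> closure L" unfolding r'_def by (rule closure_contains_Sup[OF Lne bL])
    also have "closure L \<subseteq> T" using closure_sub_closed[OF cT] unfolding L_def by auto
    finally have r'T: "r' \<in> T" .
    have ar': "a \<le> r'" unfolding r'_def using aL bL by (rule cSup_upper)
    have r'ts: "r' \<le> ts" unfolding r'_def using Lne by (intro cSup_least) (auto simp: L_def)
    show ?thesis
    proof (cases "r' < ts")
      case True
      have Pr': "P r'" using below r'T ar' True by auto
      have r'T': "r' \<in> T'" using below_M[OF r'T] le_M[OF tsT] True T'def r'T by auto
      have z0: "z r' = 0" "w r' = 0" using Pr' r'T' unfolding P_def by auto
      have nob: "ts \<le> v" if "v \<in> T" "r' < v" for v
      proof (rule ccontr)
        assume "\<not> ts \<le> v"
        hence "v \<in> L" using that unfolding L_def by auto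
        hence "v \<le> r'" unfolding r'_def using bL by (rule cSup_upper)
        thus False using that by simp
      qed
      have sig: "sigma T r' = ts" by (rule sigma_eq[OF tsT True nob]) auto
      have zts: "z ts = 0" using dd_jump[OF hz[OF r'T']] sig z0 by simp
      have wts: "w ts = 0" if tsT': "ts \<in> T'"
      proof -
        have "r' < \<beta>" using True tsT' unfolding T'def by auto
        hence r'k: "r' \<in> Tkappa T'" using kap_lt r'T' by auto
        have sig': "sigma T' r' = ts" by (rule sigma_eq[OF tsT' True]) (use nob T'_sub in auto)
        show ?thesis using dd_jump[OF hw[OF r'k]] sig sig' z0 zts by simp
      qed
      show ?thesis unfolding P_def using zts wts by auto
    next
      case False
      hence r'eq: "r' = ts" using r'ts by simp
      have ld: "\<exists>x\<in>T. ts - e < x \<and> x < ts \<and> a \<le> x" if e: "e > 0" for e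
      proof -
        have "ts - min e (ts - a) < Sup L" using r'eq e alt unfolding r'_def by simp
        then obtain x where x: "x \<in> L" "ts - min e (ts - a) < x" using less_cSup_iff[OF Lne bL] by auto
        have m1: "min e (ts - a) \<le> e" "min e (ts - a) \<le> ts - a" by auto
        have "ts - e < x" "a \<le> x" using x(2) m1 by linarith+
        thus ?thesis using x(1) unfolding L_def by auto
      qed
      have tsk: "ts \<in> Tkappa T" by (rule in_Tkappa_ld[OF cT bT tsT]) (use ld in blast)
      hence tsT': "ts \<in> T'" using T'_eq by simp
      have ldT': "\<exists>u\<in>T'. ts - e < u \<and> u < ts" if e: "e > 0" for e
      proof -
        obtain x where "x \<in> T" "ts - e < x" "x < ts" "a \<le> x" using ld[OF e] by blast
        moreover have "x \<in> T'" using calculation tsT' unfolding T'def by auto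
        ultimately show ?thesis by blast
      qed
      have tsk': "ts \<in> Tkappa T'" by (rule kap_ld[OF tsT' ldT'])
      have zts: "z ts = 0"
      proof (rule zero_by_eps)
        fix \<eta> :: real assume \<eta>: "\<eta> > 0"
        obtain d where d: "d > 0" "\<forall>u\<in>T. \<bar>u - ts\<bar> < d \<longrightarrow> cmod (z u - z ts) < \<eta>"
          using dd_cont[OF hz[OF tsT'] \<eta>] by blast
        obtain x where x: "x \<in> T" "ts - d < x" "x < ts" "a \<le> x" using ld[OF d(1)] by blast
        have "z x = 0" using below x unfolding P_def by auto
        thus "cmod (z ts) < \<eta>" using d x by (auto simp: norm_minus_commute)
      qed
      have wts: "w ts = 0"
      proof (rule zero_by_eps)
        fix \<eta> :: real assume \<eta>: "\<eta> > 0"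
        obtain d where d: "d > 0" "\<forall>u\<in>T'. \<bar>u - ts\<bar> < d \<longrightarrow> cmod (w u - w ts) < \<eta>"
          using dd_cont[OF hw[OF tsk'] \<eta>] by blast
        obtain x where x: "x \<in> T" "ts - d < x" "x < ts" "a \<le> x" using ld[OF d(1)] by blast
        have xT': "x \<in> T'" using x tsT' unfolding T'def by auto
        have "w x = 0" using below x xT' unfolding P_def by auto
        thus "cmod (w ts) < \<eta>" using d x xT' by (auto simp: norm_minus_commute)
      qed
      show ?thesis unfolding P_def using zts wts by auto
    qed
  qed
  have tsnA: "ts \<notin> A" using Pts unfolding A_def by auto
  have approach: "\<exists>u\<in>A. ts < u \<and> u < ts + \<epsilon>" if "\<epsilon> > 0" for \<epsilon>
  proof -
    have "Inf A < ts + \<epsilon>" using that unfolding ts_def by simp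
    then obtain u where "u \<in> A" "u < ts + \<epsilon>" using cInf_less_iff[OF Ane bA] by auto
    moreover have "ts \<le> u" unfolding ts_def using \<open>u \<in> A\<close> bA by (rule cInf_lower)
    moreover have "u \<noteq> ts" using tsnA \<open>u \<in> A\<close> by auto
    ultimately have "ts < u" by simp
    thus ?thesis using \<open>u \<in> A\<close> \<open>u < ts + \<epsilon>\<close> by blast
  qed
  have tsM: "ts < Sup T"
  proof -
    obtain u where "u \<in> A" "ts < u" using approach[of 1] by auto
    thus ?thesis using le_M[of u] unfolding A_def by auto
  qed
  have tsb: "ts < \<beta>"
  proof (rule ccontr)
    assume "\<not> ts < \<beta>"
    moreover have "ts \<le> \<beta>" using below_M[OF tsT tsM] .
    ultimately have eq: "ts = \<beta>" by simp
    have "0 < Sup T - \<beta>" using tsM eq by simp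
    then obtain u where u: "u \<in> A" "ts < u" "u < ts + (Sup T - \<beta>)" using approach by blast
    hence "u \<in> T" "u < Sup T" using eq unfolding A_def by auto
    hence "u \<le> \<beta>" using below_M by auto
    thus False using u eq by simp
  qed
  have tsT': "ts \<in> T'" using tsT tsb unfolding T'def by auto
  have tsk': "ts \<in> Tkappa T'" using kap_lt tsT' tsb by auto
  have z0: "z ts = 0" and w0: "w ts = 0" using Pts tsT' unfolding P_def by auto
  obtain dz where dz: "dz > 0" "\<forall>u\<in>T. \<bar>u - ts\<bar> < dz \<longrightarrow> cmod (z u - z ts) < 1"
    using dd_cont[OF hz[OF tsT'], of 1] by auto
  obtain dw where dw: "dw > 0" "\<forall>u\<in>T'. \<bar>u - ts\<bar> < dw \<longrightarrow> cmod (w u - w ts) < 1"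
    using dd_cont[OF hw[OF tsk'], of 1] by auto
  have "min dz (\<beta> - ts) > 0" using dz tsb by simp
  then obtain h where h: "h > 0" "h < min dz (\<beta> - ts)" "h < dw" "h * h * cmod lam < 1"
    using choose_h dw(1) by metis
  have zero: "z u = 0 \<and> w u = 0" if "u \<in> T" "ts \<le> u" "u \<le> ts + h" for u
  proof (rule local_zero[of ts "ts + h" 1])
    show "ts < ts + h" using h by simp
    show "u \<in> Tkappa T'" if "u \<in> T" "ts \<le> u" "u \<le> ts + h" for u
    proof -
      have "u < \<beta>" using that h by auto
      thus ?thesis using kap_lt that unfolding T'def by auto
    qed
    show "cmod (z u) \<le> 1 \<and> cmod (w u) \<le> 1" if "u \<in> T" "ts \<le> u" "u \<le> ts + h" for u
    proof -
      have "\<bar>u - ts\<bar> < dz" "\<bar>u - ts\<bar> < dw" using that h by auto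
      moreover have "u \<in> T'" using that h unfolding T'def by auto
      ultimately show ?thesis using dz dw that z0 w0 by fastforce
    qed
    show "(ts + h - ts) * (ts + h - ts) * cmod lam < 1" using h by simp
    show "(ts \<in> T \<and> z ts = 0 \<and> w ts = 0) \<or> (ts + h \<in> T \<and> z (ts + h) = 0 \<and> w (ts + h) = 0)"
      using tsT z0 w0 by auto
  qed (use that in auto)
  obtain u where u: "u \<in> A" "ts < u" "u < ts + h" using approach h by blast
  have "z u = 0 \<and> w u = 0" using zero u unfolding A_def by auto
  hence "P u" unfolding P_def by auto
  thus False using u unfolding A_def by auto
qed

end




context dyn
begin

lemma backward:
  assumes aT': "a \<in> T'" and za: "z a = 0" and wa: "w a = 0"
  shows "\<And>t. t \<in> T \<Longrightarrow> t \<le> a \<Longrightarrow> P t"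
proof (rule ccontr)
  fix t0 assume t0: "t0 \<in> T" "t0 \<le> a" "\<not> P t0"
  define A where "A = {t\<in>T. t \<le> a \<and> \<not> P t}"
  have aT: "a \<in> T" using aT' T'_sub by auto
  have ab: "a \<le> \<beta>" using aT' unfolding T'def by auto
  have Ane: "A \<noteq> {}" using t0 unfolding A_def by auto
  have bA: "bdd_above A" unfolding A_def by (rule bdd_aboveI[of _ a]) auto
  define ts where "ts = Sup A"
  have "ts \<in> closure A" unfolding ts_def by (rule closure_contains_Sup[OF Ane bA])
  also have "closure A \<subseteq> T" using closure_sub_closed[OF cT] unfolding A_def by auto
  finally have tsT: "ts \<in> T" .
  have tsa: "ts \<le> a" unfolding ts_def using Ane by (intro cSup_least) (auto simp: A_def)
  have tsT': "ts \<in> T'" using tsT tsa ab unfolding T'def by auto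
  have above: "P x" if "x \<in> T" "x \<le> a" "ts < x" for x
  proof (rule ccontr)
    assume "\<not> P x"
    hence "x \<in> A" using that unfolding A_def by auto
    hence "x \<le> ts" unfolding ts_def using bA by (rule cSup_upper)
    thus False using that by simp
  qed
  have Pts: "P ts"
  proof (cases "ts = a")
    case True thus ?thesis using za wa by (simp add: P_def)
  next
    case False
    hence alt: "ts < a" using tsa by simp
    have tsk': "ts \<in> Tkappa T'" using kap_lt tsT' alt ab by auto
    define R where "R = {x\<in>T. ts < x}"
    have aR: "a \<in> R" using aT alt unfolding R_def by auto
    have bR: "bdd_below R" unfolding R_def by (rule bdd_belowI[of _ ts]) auto
    have Rne: "R \<noteq> {}" using aR by auto
    define s' where "s' = Inf R"
    have "s' \<in> closure R" unfolding s'_def by (rule closure_contains_Inf[OF Rne bR])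
    also have "closure R \<subseteq> T" using closure_sub_closed[OF cT] unfolding R_def by auto
    finally have s'T: "s' \<in> T" .
    have s'a: "s' \<le> a" unfolding s'_def using aR bR by (rule cInf_lower)
    have tss': "ts \<le> s'" unfolding s'_def using Rne by (intro cInf_greatest) (auto simp: R_def)
    show ?thesis
    proof (cases "ts < s'")
      case True
      have Ps': "P s'" using above s'T s'a True by auto
      have s'T': "s' \<in> T'" using s'T s'a ab unfolding T'def by auto
      have z0: "z s' = 0" "w s' = 0" using Ps' s'T' unfolding P_def by auto
      have nob: "s' \<le> v" if "v \<in> T" "ts < v" for v
      proof -
        have "v \<in> R" using that unfolding R_def by auto
        thus "s' \<le> v" unfolding s'_def using bR by (rule cInf_lower)
      qed
      have sig: "sigma T ts = s'" by (rule sigma_eq[OF s'T True nob]) auto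
      have sig': "sigma T' ts = s'" by (rule sigma_eq[OF s'T' True]) (use nob T'_sub in auto)
      have j1: "z s' = z ts + w ts * complex_of_real (s' - ts)" using dd_jump[OF hz[OF tsT']] sig by simp
      have j2: "w s' = w ts + (- lam * z s') * complex_of_real (s' - ts)"
        using dd_jump[OF hw[OF tsk']] sig sig' by simp
      have wts: "w ts = 0" using j2 z0 by simp
      have zts: "z ts = 0" using j1 z0 wts by simp
      show ?thesis unfolding P_def using zts wts by auto
    next
      case False
      hence s'eq: "s' = ts" using tss' by simp
      have rd: "\<exists>x\<in>T. ts < x \<and> x < ts + e \<and> x \<le> a" if e: "e > 0" for e
      proof -
        have "Inf R < ts + min e (a - ts)" using s'eq e alt unfolding s'_def by simp
        then obtain x where x: "x \<in> R" "x < ts + min e (a - ts)" using cInf_less_iff[OF Rne bR] by auto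
        have m1: "min e (a - ts) \<le> e" "min e (a - ts) \<le> a - ts" by auto
        have "x < ts + e" "x \<le> a" using x(2) m1 by linarith+
        thus ?thesis using x(1) unfolding R_def by auto
      qed
      have zts: "z ts = 0"
      proof (rule zero_by_eps)
        fix \<eta> :: real assume \<eta>: "\<eta> > 0"
        obtain d where d: "d > 0" "\<forall>u\<in>T. \<bar>u - ts\<bar> < d \<longrightarrow> cmod (z u - z ts) < \<eta>"
          using dd_cont[OF hz[OF tsT'] \<eta>] by blast
        obtain x where x: "x \<in> T" "ts < x" "x < ts + d" "x \<le> a" using rd[OF d(1)] by blast
        have "z x = 0" using above x unfolding P_def by auto
        thus "cmod (z ts) < \<eta>" using d x by (auto simp: norm_minus_commute)
      qed
      have wts: "w ts = 0"
      proof (rule zero_by_eps)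
        fix \<eta> :: real assume \<eta>: "\<eta> > 0"
        obtain d where d: "d > 0" "\<forall>u\<in>T'. \<bar>u - ts\<bar> < d \<longrightarrow> cmod (w u - w ts) < \<eta>"
          using dd_cont[OF hw[OF tsk'] \<eta>] by blast
        obtain x where x: "x \<in> T" "ts < x" "x < ts + d" "x \<le> a" using rd[OF d(1)] by blast
        have xT': "x \<in> T'" using x ab unfolding T'def by auto
        have "w x = 0" using above x xT' unfolding P_def by auto
        thus "cmod (w ts) < \<eta>" using d x xT' by (auto simp: norm_minus_commute)
      qed
      show ?thesis unfolding P_def using zts wts by auto
    qed
  qed
  have tsnA: "ts \<notin> A" using Pts unfolding A_def by auto
  have approach: "\<exists>u\<in>A. ts - \<epsilon> < u \<and> u < ts" if "\<epsilon> > 0" for \<epsilon>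
  proof -
    have "ts - \<epsilon> < Sup A" using that unfolding ts_def by simp
    then obtain u where "u \<in> A" "ts - \<epsilon> < u" using less_cSup_iff[OF Ane bA] by auto
    moreover have "u \<le> ts" unfolding ts_def using \<open>u \<in> A\<close> bA by (rule cSup_upper)
    moreover have "u \<noteq> ts" using tsnA \<open>u \<in> A\<close> by auto
    ultimately have "u < ts" by simp
    thus ?thesis using \<open>u \<in> A\<close> \<open>ts - \<epsilon> < u\<close> by blast
  qed
  have ldT': "\<exists>u\<in>T'. ts - e < u \<and> u < ts" if e: "e > 0" for e
  proof -
    obtain u where u: "u \<in> A" "ts - e < u" "u < ts" using approach[OF e] by blast
    hence "u \<in> T'" using tsT' unfolding A_def T'def by auto
    thus ?thesis using u by blast
  qed
  have tsk': "ts \<in> Tkappa T'" by (rule kap_ld[OF tsT' ldT'])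
  have z0: "z ts = 0" and w0: "w ts = 0" using Pts tsT' unfolding P_def by auto
  obtain dz where dz: "dz > 0" "\<forall>u\<in>T. \<bar>u - ts\<bar> < dz \<longrightarrow> cmod (z u - z ts) < 1"
    using dd_cont[OF hz[OF tsT'], of 1] by auto
  obtain dw where dw: "dw > 0" "\<forall>u\<in>T'. \<bar>u - ts\<bar> < dw \<longrightarrow> cmod (w u - w ts) < 1"
    using dd_cont[OF hw[OF tsk'], of 1] by auto
  obtain h where h: "h > 0" "h < dz" "h < dw" "h * h * cmod lam < 1"
    using choose_h dw(1) dz(1) by metis
  have zero: "z u = 0 \<and> w u = 0" if "u \<in> T" "ts - h \<le> u" "u \<le> ts" for u
  proof (rule local_zero[of "ts - h" ts 1])
    show "ts - h < ts" using h by simp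
    show "u \<in> Tkappa T'" if "u \<in> T" "ts - h \<le> u" "u \<le> ts" for u
    proof (cases "u = ts")
      case True thus ?thesis using tsk' by simp
    next
      case False
      hence "u < \<beta>" using that tsT' unfolding T'def by auto
      thus ?thesis using kap_lt that tsT' unfolding T'def by auto
    qed
    show "cmod (z u) \<le> 1 \<and> cmod (w u) \<le> 1" if "u \<in> T" "ts - h \<le> u" "u \<le> ts" for u
    proof -
      have "\<bar>u - ts\<bar> < dz" "\<bar>u - ts\<bar> < dw" using that h by auto
      moreover have "u \<in> T'" using that tsT' unfolding T'def by auto
      ultimately show ?thesis using dz dw that z0 w0 by fastforce
    qed
    show "(ts - (ts - h)) * (ts - (ts - h)) * cmod lam < 1" using h by simp
    show "(ts - h \<in> T \<and> z (ts - h) = 0 \<and> w (ts - h) = 0) \<or> (ts \<in> T \<and> z ts = 0 \<and> w ts = 0)"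
      using tsT z0 w0 by auto
  qed (use that in auto)
  obtain u where u: "u \<in> A" "ts - h < u" "u < ts" using approach h by blast
  have "z u = 0 \<and> w u = 0" using zero u unfolding A_def by auto
  hence "P u" unfolding P_def by auto
  thus False using u unfolding A_def by auto
qed

lemma uniq:
  assumes "a \<in> T'" "z a = 0" "w a = 0" "t \<in> T"
  shows "z t = 0" "t \<in> T' \<Longrightarrow> w t = 0"
proof -
  have "P t" using forward[OF assms(1-3) assms(4)] backward[OF assms(1-3) assms(4)] by linarith
  thus "z t = 0" "t \<in> T' \<Longrightarrow> w t = 0" unfolding P_def by auto
qed

end




lemma det_lemma:
  fixes u1 u2 v1 v2 x w :: complex
  assumes "u1 * x + u2 * w = 0" "v1 * x + v2 * w = 0" "x \<noteq> 0 \<or> w \<noteq> 0"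
  shows "u1 * v2 - v1 * u2 = 0"
proof -
  have "x * (u1 * v2 - v1 * u2) = v2 * (u1 * x + u2 * w) - u2 * (v1 * x + v2 * w)" by (simp add: algebra_simps)
  hence e1: "x * (u1 * v2 - v1 * u2) = 0" using assms by simp
  have "w * (u1 * v2 - v1 * u2) = - v1 * (u1 * x + u2 * w) + u1 * (v1 * x + v2 * w)" by (simp add: algebra_simps)
  hence e2: "w * (u1 * v2 - v1 * u2) = 0" using assms by simp
  show ?thesis using e1 e2 assms(3) by auto
qed

lemma det_converse:
  fixes u1 u2 v1 v2 :: complex
  assumes "u1 * v2 - v1 * u2 = 0"
  obtains x w where "u1 * x + u2 * w = 0" "v1 * x + v2 * w = 0" "x \<noteq> 0 \<or> w \<noteq> 0"
proof (cases "u1 \<noteq> 0 \<or> u2 \<noteq> 0")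
  case True
  have "u1 * u2 + u2 * (- u1) = 0" by simp
  moreover have "v1 * u2 + v2 * (- u1) = 0" using assms by (simp add: algebra_simps)
  ultimately show ?thesis using that True by (metis neg_equal_0_iff_equal)
next
  case False
  hence u: "u1 = 0" "u2 = 0" by auto
  show ?thesis
  proof (cases "v1 \<noteq> 0 \<or> v2 \<noteq> 0")
    case True
    have "u1 * v2 + u2 * (- v1) = 0" using u by simp
    moreover have "v1 * v2 + v2 * (- v1) = 0" by simp
    ultimately show ?thesis using that True by (metis neg_equal_0_iff_equal)
  next
    case False
    thus ?thesis using that[of 1 0] u by auto
  qed
qed

locale tsc =
  fixes T :: "real set"
  assumes cT: "closed T" and bT: "bounded T" and neT: "T \<noteq> {}"
    and ab: "Inf T \<noteq> rho T (Sup T)"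
begin

lemma TK: "Tkappa T = {t\<in>T. t \<le> rho T (Sup T)}" using Tkappa_eq[OF cT bT neT] .

lemma TK_closed: "closed (Tkappa T)"
proof -
  have "Tkappa T = T \<inter> {..rho T (Sup T)}" unfolding TK by auto
  thus ?thesis using cT by (simp add: closed_Int)
qed

lemma TK_bounded: "bounded (Tkappa T)" using bT Tkappa_sub bounded_subset by blast

lemma InfT: "Inf T \<in> T" "\<And>x. x \<in> T \<Longrightarrow> Inf T \<le> x" using Inf_props[OF cT bT neT] by auto

lemma betaT: "rho T (Sup T) \<in> T" using rho_props(1)[OF cT Sup_props(1)[OF cT bT neT]] .

lemma InfTK: "Inf T \<in> Tkappa T" using InfT betaT unfolding TK by auto
lemma betaTK: "rho T (Sup T) \<in> Tkappa T" using betaT unfolding TK by auto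

lemma ns_T: "\<exists>u0\<in>T. u0 \<noteq> t" using InfT betaT ab by metis
lemma ns_TK: "\<exists>u0\<in>Tkappa T. u0 \<noteq> t" using InfTK betaTK ab by metis

lemma dT_eq: "has_delta_derivative T f D t \<Longrightarrow> delta_deriv T f t = D"
  using ns_T[of t] delta_deriv_eq[OF cT bT] by blast

lemma dTK_eq: "has_delta_derivative (Tkappa T) f D t \<Longrightarrow> delta_deriv (Tkappa T) f t = D"
  using ns_TK[of t] delta_deriv_eq[OF TK_closed TK_bounded] by blast

lemma has_dT: "\<exists>D. has_delta_derivative T f D t \<Longrightarrow> has_delta_derivative T f (delta_deriv T f t) t"
  using dT_eq by auto

lemma has_dTK: "\<exists>D. has_delta_derivative (Tkappa T) f D t \<Longrightarrow> has_delta_derivative (Tkappa T) f (delta_deriv (Tkappa T) f t) t"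
  using dTK_eq by auto

lemma comb:
  fixes c1 c2 :: complex
  assumes s1: "is_solution T q a lam y1" and s2: "is_solution T q a lam y2"
  defines "y \<equiv> (\<lambda>x. c1 * y1 x + c2 * y2 x)"
  shows "is_solution T q a lam y"
    "\<And>t. t \<in> Tkappa T \<Longrightarrow> delta_deriv T y t = c1 * delta_deriv T y1 t + c2 * delta_deriv T y2 t"
proof -
  have h1: "has_delta_derivative T y1 (delta_deriv T y1 t) t" if "t \<in> Tkappa T" for t
    using s1 that has_dT unfolding is_solution_def by blast
  have h2: "has_delta_derivative T y2 (delta_deriv T y2 t) t" if "t \<in> Tkappa T" for t
    using s2 that has_dT unfolding is_solution_def by blast
  have hy: "has_delta_derivative T y (c1 * delta_deriv T y1 t + c2 * delta_deriv T y2 t) t" if "t \<in> Tkappa T" for t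
    unfolding y_def by (rule has_comb[OF h1[OF that] h2[OF that]])
  show dy: "delta_deriv T y t = c1 * delta_deriv T y1 t + c2 * delta_deriv T y2 t" if "t \<in> Tkappa T" for t
    using dT_eq[OF hy[OF that]] .
  have g1: "has_delta_derivative (Tkappa T) (delta_deriv T y1) (delta_deriv (Tkappa T) (delta_deriv T y1) t) t"
    if "t \<in> Tkappa (Tkappa T)" for t
    using s1 that has_dTK unfolding is_solution_def by blast
  have g2: "has_delta_derivative (Tkappa T) (delta_deriv T y2) (delta_deriv (Tkappa T) (delta_deriv T y2) t) t"
    if "t \<in> Tkappa (Tkappa T)" for t
    using s2 that has_dTK unfolding is_solution_def by blast
  have gy: "has_delta_derivative (Tkappa T) (delta_deriv T y)
      (c1 * delta_deriv (Tkappa T) (delta_deriv T y1) t + c2 * delta_deriv (Tkappa T) (delta_deriv T y2) t) t"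
    if "t \<in> Tkappa (Tkappa T)" for t
  proof (rule has_cong[OF TK_closed])
    show "has_delta_derivative (Tkappa T) (\<lambda>x. c1 * delta_deriv T y1 x + c2 * delta_deriv T y2 x)
      (c1 * delta_deriv (Tkappa T) (delta_deriv T y1) t + c2 * delta_deriv (Tkappa T) (delta_deriv T y2) t) t"
      by (rule has_comb[OF g1[OF that] g2[OF that]])
    show "\<And>x. x \<in> Tkappa T \<Longrightarrow> c1 * delta_deriv T y1 x + c2 * delta_deriv T y2 x = delta_deriv T y x"
      using dy by simp
  qed
  have ddy: "delta_deriv (Tkappa T) (delta_deriv T y) t =
      c1 * delta_deriv (Tkappa T) (delta_deriv T y1) t + c2 * delta_deriv (Tkappa T) (delta_deriv T y2) t"
    if "t \<in> Tkappa (Tkappa T)" for t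
    using dTK_eq[OF gy[OF that]] .
  show "is_solution T q a lam y"
    unfolding is_solution_def
  proof (intro conjI ballI)
    show "\<exists>D. has_delta_derivative T y D t" if "t \<in> Tkappa T" for t using hy[OF that] by blast
    show "\<exists>D. has_delta_derivative (Tkappa T) (delta_deriv T y) D t" if "t \<in> Tkappa (Tkappa T)" for t
      using gy[OF that] by blast
    fix t assume t: "t \<in> Tkappa (Tkappa T)"
    have e1: "- delta_deriv (Tkappa T) (delta_deriv T y1) t + complex_of_real (q t) * y1 a = lam * y1 (sigma T t)"
      using s1 t unfolding is_solution_def by blast
    have e2: "- delta_deriv (Tkappa T) (delta_deriv T y2) t + complex_of_real (q t) * y2 a = lam * y2 (sigma T t)"
      using s2 t unfolding is_solution_def by blast
    have "- delta_deriv (Tkappa T) (delta_deriv T y) t + complex_of_real (q t) * y a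
      = c1 * (- delta_deriv (Tkappa T) (delta_deriv T y1) t + complex_of_real (q t) * y1 a)
      + c2 * (- delta_deriv (Tkappa T) (delta_deriv T y2) t + complex_of_real (q t) * y2 a)"
    proof -
      have ya: "y a = c1 * y1 a + c2 * y2 a" unfolding y_def by simp
      show ?thesis unfolding ddy[OF t] ya by (simp add: algebra_simps)
    qed
    also have "\<dots> = lam * y (sigma T t)"
    proof -
      have ys: "y (sigma T t) = c1 * y1 (sigma T t) + c2 * y2 (sigma T t)" unfolding y_def by simp
      show ?thesis unfolding e1 e2 ys by (simp add: algebra_simps)
    qed
    finally show "- delta_deriv (Tkappa T) (delta_deriv T y) t + complex_of_real (q t) * y a = lam * y (sigma T t)" .
  qed
qed

lemma bform_comb:
  fixes c1 c2 :: complex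
  assumes s1: "is_solution T q a lam y1" and s2: "is_solution T q a lam y2"
  shows "bform T k1 k2 k3 k4 (\<lambda>x. c1 * y1 x + c2 * y2 x) = c1 * bform T k1 k2 k3 k4 y1 + c2 * bform T k1 k2 k3 k4 y2"
  unfolding bform_def comb(2)[OF s1 s2 InfTK] comb(2)[OF s1 s2 betaTK] by (simp add: algebra_simps)

end




theorem theorem1:
  fixes T :: "real set" and q :: "real \<Rightarrow> real" and a :: real
    and a11 a12 a21 a22 b11 b12 b21 b22 :: real
    and S C :: "complex \<Rightarrow> real \<Rightarrow> complex"
  assumes ts: "time_scale T" and bdd: "bounded T"
    and ab: "Inf T \<noteq> rho T (Sup T)"
    and aT: "a \<in> Tkappa T"
    and qc: "continuous_on T q"
    and S_sol: "\<And>lam. is_solution T q a lam (S lam) \<and> S lam a = 0 \<and> delta_deriv T (S lam) a = 1"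
    and C_sol: "\<And>lam. is_solution T q a lam (C lam) \<and> C lam a = 1 \<and> delta_deriv T (C lam) a = 0"
  shows "\<forall>lam::complex.
           (bform T a11 a12 a21 a22 (C lam) * bform T b11 b12 b21 b22 (S lam)
            - bform T b11 b12 b21 b22 (C lam) * bform T a11 a12 a21 a22 (S lam) = 0)
           \<longleftrightarrow> is_eigenvalue T q a a11 a12 a21 a22 b11 b12 b21 b22 lam"
proof -
  have cT: "closed T" and neT: "T \<noteq> {}" using ts unfolding time_scale_def by auto
  interpret tsc T using cT bdd neT ab by unfold_locales
  have aT0: "a \<in> T" using aT Tkappa_sub by auto
  show ?thesis
  proof (intro allI iffI)
    fix lam :: complex
    have sS: "is_solution T q a lam (S lam)" and sC: "is_solution T q a lam (C lam)"
      using S_sol C_sol by auto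
    let ?UC = "bform T a11 a12 a21 a22 (C lam)"
    let ?US = "bform T a11 a12 a21 a22 (S lam)"
    let ?VC = "bform T b11 b12 b21 b22 (C lam)"
    let ?VS = "bform T b11 b12 b21 b22 (S lam)"
    {
      assume det: "?UC * ?VS - ?VC * ?US = 0"
      obtain x w where xw: "?UC * x + ?US * w = 0" "?VC * x + ?VS * w = 0" "x \<noteq> 0 \<or> w \<noteq> 0"
        using det_converse[OF det] by blast
      define y where "y = (\<lambda>t. x * C lam t + w * S lam t)"
      have sol: "is_solution T q a lam y" unfolding y_def by (rule comb(1)[OF sC sS])
      have bA: "bform T a11 a12 a21 a22 y = 0"
        unfolding y_def bform_comb[OF sC sS] using xw by (simp add: algebra_simps)
      have bB: "bform T b11 b12 b21 b22 y = 0"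
        unfolding y_def bform_comb[OF sC sS] using xw by (simp add: algebra_simps)
      have nt: "\<exists>t\<in>T. y t \<noteq> 0"
      proof (cases "x = 0")
        case False
        have "y a = x" unfolding y_def using S_sol C_sol by simp
        thus ?thesis using False aT0 by auto
      next
        case True
        hence w0: "w \<noteq> 0" using xw by simp
        have "\<exists>t\<in>T. S lam t \<noteq> 0"
        proof (rule ccontr)
          assume "\<not> (\<exists>t\<in>T. S lam t \<noteq> 0)"
          hence Z: "\<And>t. t \<in> T \<Longrightarrow> S lam t = 0" by auto
          have sa: "sigma T a \<in> T" using sigma_props(1)[OF cT aT0] .
          have "has_delta_derivative T (S lam) 0 a"
            unfolding has_delta_derivative_def using aT Z sa by (auto intro!: exI[of _ 1])
          hence "delta_deriv T (S lam) a = 0" by (rule dT_eq)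
          thus False using S_sol by simp
        qed
        then obtain t where "t \<in> T" "S lam t \<noteq> 0" by blast
        moreover have "y t = w * S lam t" unfolding y_def using True by simp
        ultimately have "y t \<noteq> 0" using w0 by simp
        thus ?thesis using \<open>t \<in> T\<close> by blast
      qed
      show "is_eigenvalue T q a a11 a12 a21 a22 b11 b12 b21 b22 lam"
        unfolding is_eigenvalue_def using sol nt bA bB by blast
    }
    {
      assume "is_eigenvalue T q a a11 a12 a21 a22 b11 b12 b21 b22 lam"
      then obtain y where y: "is_solution T q a lam y" "\<exists>t\<in>T. y t \<noteq> 0"
        "bform T a11 a12 a21 a22 y = 0" "bform T b11 b12 b21 b22 y = 0"
        unfolding is_eigenvalue_def by blast
      define c1 where "c1 = y a"
      define c2 where "c2 = delta_deriv T y a"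
      define yc where "yc = (\<lambda>t. c1 * C lam t + c2 * S lam t)"
      have solc: "is_solution T q a lam yc" unfolding yc_def by (rule comb(1)[OF sC sS])
      have dyc: "delta_deriv T yc a = c2"
        unfolding yc_def comb(2)[OF sC sS aT] using S_sol C_sol by simp
      define z where "z = (\<lambda>t. 1 * y t + (-1) * yc t)"
      have solz: "is_solution T q a lam z" unfolding z_def by (rule comb(1)[OF y(1) solc])
      have dz: "delta_deriv T z t = delta_deriv T y t - delta_deriv T yc t" if "t \<in> Tkappa T" for t
        unfolding z_def comb(2)[OF y(1) solc that] by simp
      have za: "z a = 0" unfolding z_def yc_def c1_def using S_sol C_sol by simp
      have dza: "delta_deriv T z a = 0" using dz[OF aT] dyc unfolding c2_def by simp
      interpret dyn T z "delta_deriv T z" lam "rho T (Sup T)" "Tkappa T"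
      proof (unfold_locales)
        show "closed T" "bounded T" "T \<noteq> {}" using cT bdd neT by auto
        show "rho T (Sup T) = rho T (Sup T)" ..
        show "Tkappa T = {t \<in> T. t \<le> rho T (Sup T)}" by (rule TK)
        show "has_delta_derivative T z (delta_deriv T z t) t" if "t \<in> Tkappa T" for t
          using solz that has_dT unfolding is_solution_def by blast
        show "has_delta_derivative (Tkappa T) (delta_deriv T z) (- lam * z (sigma T t)) t"
          if t: "t \<in> Tkappa (Tkappa T)" for t
        proof -
          have h: "has_delta_derivative (Tkappa T) (delta_deriv T z) (delta_deriv (Tkappa T) (delta_deriv T z) t) t"
            using solz t has_dTK unfolding is_solution_def by blast
          have "- delta_deriv (Tkappa T) (delta_deriv T z) t + complex_of_real (q t) * z a = lam * z (sigma T t)"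
            using solz t unfolding is_solution_def by blast
          hence "- delta_deriv (Tkappa T) (delta_deriv T z) t = lam * z (sigma T t)" using za by simp
          hence "delta_deriv (Tkappa T) (delta_deriv T z) t = - lam * z (sigma T t)"
            by (metis minus_equation_iff mult_minus_left)
          thus ?thesis using h by simp
        qed
      qed
      have zz: "z t = 0" if "t \<in> T" for t using uniq(1)[OF aT za dza that] .
      have dzz: "delta_deriv T z t = 0" if "t \<in> Tkappa T" for t
        using uniq(2)[OF aT za dza _ that] that Tkappa_sub by auto
      have bz: "bform T k1 k2 k3 k4 z = 0" for k1 k2 k3 k4
        unfolding bform_def using zz[OF InfT(1)] zz[OF betaT] dzz[OF InfTK] dzz[OF betaTK] by simp
      have byc: "bform T k1 k2 k3 k4 yc = bform T k1 k2 k3 k4 y" for k1 k2 k3 k4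
        using bz[of k1 k2 k3 k4] unfolding z_def bform_comb[OF y(1) solc] by simp
      have e1: "?UC * c1 + ?US * c2 = 0"
        using byc[of a11 a12 a21 a22] y(3) unfolding yc_def bform_comb[OF sC sS] by (simp add: algebra_simps)
      have e2: "?VC * c1 + ?VS * c2 = 0"
        using byc[of b11 b12 b21 b22] y(4) unfolding yc_def bform_comb[OF sC sS] by (simp add: algebra_simps)
      have nz: "c1 \<noteq> 0 \<or> c2 \<noteq> 0"
      proof (rule ccontr)
        assume "\<not> (c1 \<noteq> 0 \<or> c2 \<noteq> 0)"
        hence "\<And>t. yc t = 0" unfolding yc_def by simp
        hence "\<And>t. t \<in> T \<Longrightarrow> y t = 0" using zz unfolding z_def by simp
        thus False using y(2) by blast
      qed
      show "?UC * ?VS - ?VC * ?US = 0" by (rule det_lemma[OF e1 e2 nz])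
    }
  qed
qed



end
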